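(* Let $f\in\mathbf{C}\{X,Y\}$ be a nonzero power series without constant term such that the curve $f=0$ is reduced, and let $l\in\mathbf{C}\{X,Y\}$ be a power series without constant term with $\operatorname{ord} l=1$. Let $J(f,l)=\frac{\partial f}{\partial X}\frac{\partial l}{\partial Y}-\frac{\partial f}{\partial Y}\frac{\partial l}{\partial X}$ and assume $J(f,l)(0,0)=0$. If the curves $l=0$ and $f=0$ are transverse, then the curves $l=0$ and $J(f,l)=0$ are transverse.
   Context: $\mathbf{C}\{X,Y\}$ is the ring of convergent complex power series. For a nonzero series $g=\sum c_{\alpha\beta}X^\alpha Y^\beta$, $\operatorname{ord} g=\min\{\alpha+\beta: c_{\alpha\beta}\neq 0\}$ and the initial form of $g$ is $\sum_{\alpha+\beta=\operatorname{ord} g}c_{\alpha\beta}X^\alpha Y^\beta$; the tangents to $g=0$ are the lines given by the linear factors of the initial form. Two curves are transverse if they have no common tangent. A curve $f=0$ is reduced if $f$ has no multiple irreducible factors. *)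

theory Defs
  imports "HOL-Analysis.Analysis"
begin

text \<open>A formal power series in X, Y over C is represented by its coefficient
  function: g a b is the coefficient of X^a Y^b.\<close>
type_synonym ps2 = "nat \<Rightarrow> nat \<Rightarrow> complex"

definition convergent_ps :: "ps2 \<Rightarrow> bool" where
  "convergent_ps g \<longleftrightarrow>
     (\<exists>r::real. r > 0 \<and> (\<lambda>(a,b). norm (g a b) * r ^ (a + b)) summable_on (UNIV :: (nat \<times> nat) set))"

definition ps_zero :: ps2 where "ps_zero = (\<lambda>a b. 0)"
definition ps_one :: ps2 where "ps_one = (\<lambda>a b. if a = 0 \<and> b = 0 then 1 else 0)"
definition ps_add :: "ps2 \<Rightarrow> ps2 \<Rightarrow> ps2" where "ps_add f g = (\<lambda>a b. f a b + g a b)"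
definition ps_sub :: "ps2 \<Rightarrow> ps2 \<Rightarrow> ps2" where "ps_sub f g = (\<lambda>a b. f a b - g a b)"

definition ps_mul :: "ps2 \<Rightarrow> ps2 \<Rightarrow> ps2" where
  "ps_mul f g = (\<lambda>a b. \<Sum>i\<le>a. \<Sum>j\<le>b. f i j * g (a - i) (b - j))"

definition ps_dX :: "ps2 \<Rightarrow> ps2" where "ps_dX f = (\<lambda>a b. of_nat (Suc a) * f (Suc a) b)"
definition ps_dY :: "ps2 \<Rightarrow> ps2" where "ps_dY f = (\<lambda>a b. of_nat (Suc b) * f a (Suc b))"

definition jac :: "ps2 \<Rightarrow> ps2 \<Rightarrow> ps2" where
  "jac f l = ps_sub (ps_mul (ps_dX f) (ps_dY l)) (ps_mul (ps_dY f) (ps_dX l))"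

definition cdvd :: "ps2 \<Rightarrow> ps2 \<Rightarrow> bool" where
  "cdvd p f \<longleftrightarrow> (\<exists>q. convergent_ps q \<and> f = ps_mul p q)"

definition cunit :: "ps2 \<Rightarrow> bool" where
  "cunit u \<longleftrightarrow> convergent_ps u \<and> cdvd u ps_one"

definition cirreducible :: "ps2 \<Rightarrow> bool" where
  "cirreducible p \<longleftrightarrow> convergent_ps p \<and> p \<noteq> ps_zero \<and> \<not> cunit p \<and>
     (\<forall>a b. convergent_ps a \<and> convergent_ps b \<and> p = ps_mul a b \<longrightarrow> cunit a \<or> cunit b)"

definition reduced_ps :: "ps2 \<Rightarrow> bool" where
  "reduced_ps f \<longleftrightarrow> \<not> (\<exists>p. cirreducible p \<and> cdvd (ps_mul p p) f)"

definition ps_ord :: "ps2 \<Rightarrow> nat" where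
  "ps_ord g = (LEAST d. \<exists>a b. a + b = d \<and> g a b \<noteq> 0)"

definition initial_form :: "ps2 \<Rightarrow> ps2" where
  "initial_form g = (\<lambda>a b. if a + b = ps_ord g then g a b else 0)"

definition lin_form :: "complex \<Rightarrow> complex \<Rightarrow> ps2" where
  "lin_form \<alpha> \<beta> = (\<lambda>a b. if a = 1 \<and> b = 0 then \<alpha> else if a = 0 \<and> b = 1 then \<beta> else 0)"

definition is_tangent :: "ps2 \<Rightarrow> complex \<Rightarrow> complex \<Rightarrow> bool" where
  "is_tangent g \<alpha> \<beta> \<longleftrightarrow> g \<noteq> ps_zero \<and> (\<alpha>, \<beta>) \<noteq> (0, 0) \<and>
     (\<exists>h. (\<forall>a b. a + b \<noteq> ps_ord g - 1 \<longrightarrow> h a b = 0) \<and>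
          initial_form g = ps_mul (lin_form \<alpha> \<beta>) h)"

definition transverse :: "ps2 \<Rightarrow> ps2 \<Rightarrow> bool" where
  "transverse f g \<longleftrightarrow> \<not> (\<exists>\<alpha> \<beta>. is_tangent f \<alpha> \<beta> \<and> is_tangent g \<alpha> \<beta>)"

end

theory Submission imports Defs "HOL-Computational_Algebra.Polynomial" begin

definition ev :: "nat \<Rightarrow> ps2 \<Rightarrow> complex \<Rightarrow> complex \<Rightarrow> complex" where
  "ev d P x y = (\<Sum>i\<le>d. P i (d - i) * x ^ i * y ^ (d - i))"
lemma dsum: "(\<Sum>i'\<le>(i::nat). \<Sum>j'\<le>(j::nat). if i' = a \<and> j' = b then c else 0) = (if a \<le> i \<and> b \<le> j then (c::complex) else 0)"
proof -
  have "(\<Sum>j'\<le>j. if i' = a \<and> j' = b then c else 0) = (if i' = a then (if b \<le> j then c else 0) else 0)" for i'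
    by (cases "i' = a") (simp_all add: sum.delta sum.delta')
  then show ?thesis by (simp add: sum.delta sum.delta')
qed
lemma mul_lin:
  "ps_mul (lin_form \<alpha> \<beta>) h i j =
     (if 1 \<le> i then \<alpha> * h (i - 1) j else 0) + (if 1 \<le> j then \<beta> * h i (j - 1) else 0)"
proof -
  have e: "lin_form \<alpha> \<beta> i' j' * h (i - i') (j - j') =
     (if i' = 1 \<and> j' = 0 then \<alpha> * h (i - 1) j else 0) + (if i' = 0 \<and> j' = 1 then \<beta> * h i (j - 1) else 0)" for i' j'
    by (auto simp: lin_form_def)
  show ?thesis unfolding ps_mul_def e sum.distrib dsum by simp
qed
lemma ev_mul_lin0: "ev 0 (ps_mul (lin_form \<alpha> \<beta>) h) x y = 0"
  by (simp add: ev_def mul_lin)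

lemma ev_mul_lin: "ev (Suc m) (ps_mul (lin_form \<alpha> \<beta>) h) x y = (\<alpha> * x + \<beta> * y) * ev m h x y"
proof -
  have "ev (Suc m) (ps_mul (lin_form \<alpha> \<beta>) h) x y =
     (\<Sum>i\<le>Suc m. (if 1 \<le> i then \<alpha> * h (i - 1) (Suc m - i) * x ^ i * y ^ (Suc m - i) else 0)
   + (if 1 \<le> Suc m - i then \<beta> * h i (Suc m - i - 1) * x ^ i * y ^ (Suc m - i) else 0))"
    unfolding ev_def mul_lin by (intro sum.cong) (auto simp: algebra_simps)
  also have "\<dots> = (\<Sum>i\<le>Suc m. (if 1 \<le> i then \<alpha> * h (i - 1) (Suc m - i) * x ^ i * y ^ (Suc m - i) else 0))
   + (\<Sum>i\<le>Suc m. (if 1 \<le> Suc m - i then \<beta> * h i (Suc m - i - 1) * x ^ i * y ^ (Suc m - i) else 0))"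
    by (rule sum.distrib)
  also have "(\<Sum>i\<le>Suc m. (if 1 \<le> i then \<alpha> * h (i - 1) (Suc m - i) * x ^ i * y ^ (Suc m - i) else 0))
      = \<alpha> * x * ev m h x y"
    unfolding sum.atMost_Suc_shift ev_def by (simp add: sum_distrib_left algebra_simps)
  also have "(\<Sum>i\<le>Suc m. (if 1 \<le> Suc m - i then \<beta> * h i (Suc m - i - 1) * x ^ i * y ^ (Suc m - i) else 0))
      = \<beta> * y * ev m h x y"
    unfolding sum.atMost_Suc ev_def sum_distrib_left
    by (simp, intro sum.cong refl) (auto simp: Suc_diff_le algebra_simps)
  finally show ?thesis by (simp add: algebra_simps)
qed

lemma coeff_lin_mult: "coeff ([:c, 1:] * q) k = c * coeff q k + (if k = 0 then 0 else coeff q (k - 1))"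
  for c :: complex
  by (cases k) (simp_all add: mult_pCons_left algebra_simps)

lemma lin_div:
  fixes P :: ps2
  assumes ab: "(\<alpha>, \<beta>) \<noteq> (0, 0)" and hom: "\<forall>i j. i + j \<noteq> Suc m \<longrightarrow> P i j = 0"
    and z: "ev (Suc m) P \<beta> (-\<alpha>) = 0"
  shows "\<exists>h. (\<forall>i j. i + j \<noteq> m \<longrightarrow> h i j = 0) \<and> P = ps_mul (lin_form \<alpha> \<beta>) h"
proof (cases "\<alpha> = 0")
  case True
  then have b: "\<beta> \<noteq> 0" using ab by auto
  have s0: "(\<Sum>i\<le>m. P i (Suc m - i) * \<beta> ^ i * (- \<alpha>) ^ (Suc m - i)) = 0"
    by (rule sum.neutral) (auto simp: True)
  have "ev (Suc m) P \<beta> (-\<alpha>) = P (Suc m) 0 * \<beta> ^ Suc m"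
    unfolding ev_def sum.atMost_Suc s0 by simp
  then have Pn: "P (Suc m) 0 = 0" using z b by simp
  define h where "h = (\<lambda>i j. P i (Suc j) / \<beta>)"
  have "P = ps_mul (lin_form \<alpha> \<beta>) h"
  proof (intro ext)
    fix i j
    show "P i j = ps_mul (lin_form \<alpha> \<beta>) h i j"
    proof (cases j)
      case 0
      then show ?thesis using Pn hom by (cases "i = Suc m") (auto simp: mul_lin True)
    next
      case (Suc k)
      then show ?thesis using b by (simp add: mul_lin True h_def)
    qed
  qed
  moreover have "\<forall>i j. i + j \<noteq> m \<longrightarrow> h i j = 0" using hom by (simp add: h_def)
  ultimately show ?thesis by blast
next
  case False
  define p where "p = (\<Sum>k\<le>Suc m. monom (P k (Suc m - k)) k)"
  have cp: "coeff p k = (if k \<le> Suc m then P k (Suc m - k) else 0)" for k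
    by (simp add: p_def coeff_sum coeff_monom)
  have pp: "poly p t = (\<Sum>k\<le>Suc m. P k (Suc m - k) * t ^ k)" for t
    by (simp add: p_def poly_sum poly_monom)
  have "ev (Suc m) P \<beta> (-\<alpha>) = (-\<alpha>) ^ Suc m * poly p (-\<beta> / \<alpha>)"
    unfolding ev_def pp sum_distrib_left
  proof (intro sum.cong refl)
    fix k assume "k \<in> {..Suc m}"
    then have "(-\<alpha>) ^ Suc m = (-\<alpha>) ^ k * (-\<alpha>) ^ (Suc m - k)"
      by (simp add: power_add[symmetric])
    moreover have "(-\<beta> / \<alpha>) ^ k = \<beta> ^ k / (-\<alpha>) ^ k"
      by (simp add: power_divide[symmetric])
    ultimately show "P k (Suc m - k) * \<beta> ^ k * (- \<alpha>) ^ (Suc m - k) =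
         (- \<alpha>) ^ Suc m * (P k (Suc m - k) * (- \<beta> / \<alpha>) ^ k)"
      using False by (simp add: field_simps)
  qed
  then have "poly p (-\<beta> / \<alpha>) = 0" using z False by simp
  then have "[:\<beta> / \<alpha>, 1:] dvd p" using poly_eq_0_iff_dvd[of p "-\<beta> / \<alpha>"] by simp
  then obtain q where pq: "p = [:\<beta> / \<alpha>, 1:] * q" by (elim dvdE)
  have dp: "degree p \<le> Suc m" by (rule degree_le) (simp add: cp)
  have dq: "degree q \<le> m"
  proof (cases "q = 0")
    case False
    have "degree p = 1 + degree q" unfolding pq
      by (subst degree_mult_eq) (use False in auto)
    then show ?thesis using dp by simp
  qed simp
  have qn: "coeff q (Suc m) = 0" using dq by (simp add: coeff_eq_0)
  define h where "h = (\<lambda>i j. if i + j = m then coeff q i / \<alpha> else 0)"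
  have "P = ps_mul (lin_form \<alpha> \<beta>) h"
  proof (intro ext)
    fix i j
    show "P i j = ps_mul (lin_form \<alpha> \<beta>) h i j"
    proof (cases "i + j = Suc m")
      case False
      then show ?thesis using hom by (auto simp: mul_lin h_def)
    next
      case True
      have "j = Suc m - i" using True by simp
      then have "P i j = coeff p i" using True by (simp add: cp)
      also have "\<dots> = \<beta> / \<alpha> * coeff q i + (if i = 0 then 0 else coeff q (i - 1))"
        unfolding pq coeff_lin_mult ..
      also have "\<dots> = ps_mul (lin_form \<alpha> \<beta>) h i j"
      proof (cases "j = 0")
        case True
        with \<open>i + j = Suc m\<close> have "i = Suc m" by simp
        then show ?thesis using True qn \<open>\<alpha> \<noteq> 0\<close> by (simp add: mul_lin h_def)
      next
        case j: False
        show ?thesis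
        proof (cases "i = 0")
          case True
          then show ?thesis using j \<open>i + j = Suc m\<close> \<open>\<alpha> \<noteq> 0\<close> by (auto simp: mul_lin h_def)
        next
          case False
          then show ?thesis using j \<open>i + j = Suc m\<close> \<open>\<alpha> \<noteq> 0\<close> by (auto simp: mul_lin h_def)
        qed
      qed
      finally show ?thesis .
    qed
  qed
  moreover have "\<forall>i j. i + j \<noteq> m \<longrightarrow> h i j = 0" by (simp add: h_def)
  ultimately show ?thesis by blast
qed


lemma ord_props:
  assumes "g \<noteq> ps_zero"
  shows "\<exists>a b. a + b = ps_ord g \<and> g a b \<noteq> 0" and "a + b < ps_ord g \<Longrightarrow> g a b = 0"
proof -
  from assms obtain a0 b0 where "g a0 b0 \<noteq> 0" by (auto simp: ps_zero_def fun_eq_iff)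
  then have ex: "\<exists>d a b. a + b = d \<and> g a b \<noteq> 0" by blast
  show "\<exists>a b. a + b = ps_ord g \<and> g a b \<noteq> 0"
    unfolding ps_ord_def by (rule LeastI_ex[OF ex])
  show "g a b = 0" if "a + b < ps_ord g"
    using not_less_Least[OF that[unfolded ps_ord_def]] by blast
qed

lemma ord_eq:
  assumes "g a b \<noteq> 0" "a + b = m" "\<forall>a b. a + b < m \<longrightarrow> g a b = 0"
  shows "ps_ord g = m"
  unfolding ps_ord_def
proof (rule Least_equality)
  show "\<exists>a' b'. a' + b' = m \<and> g a' b' \<noteq> 0" using assms by blast
  show "m \<le> y" if "\<exists>a b. a + b = y \<and> g a b \<noteq> 0" for y
    using that assms(3) by (metis not_le)
qed

lemma mul_low:
  assumes f0: "\<forall>a b. a + b < m \<longrightarrow> f a b = 0" and ij: "i + j \<le> m"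
  shows "ps_mul f g i j = (if i + j = m then f i j * g 0 0 else 0)"
proof -
  have t: "f i' j' * g (i - i') (j - j') = (if i' = i \<and> j' = j then (if i + j = m then f i j * g 0 0 else 0) else 0)"
    if "i' \<le> i" "j' \<le> j" for i' j'
  proof (cases "i' = i \<and> j' = j")
    case True
    then show ?thesis using f0 ij by auto
  next
    case False
    then have "i' + j' < m" using that ij by auto
    then show ?thesis using f0 False by auto
  qed
  have "ps_mul f g i j = (\<Sum>i'\<le>i. \<Sum>j'\<le>j. if i' = i \<and> j' = j then (if i + j = m then f i j * g 0 0 else 0) else 0)"
    unfolding ps_mul_def by (intro sum.cong refl) (simp add: t)
  also have "\<dots> = (if i + j = m then f i j * g 0 0 else 0)" by (rule trans[OF dsum]) simp
  finally show ?thesis .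
qed

lemma euler:
  fixes f :: ps2
  shows "(\<Sum>i\<le>m. (of_nat (Suc i) * f (Suc i) (m - i) * \<beta> - of_nat (Suc (m - i)) * f i (Suc (m - i)) * \<alpha>)
            * \<beta> ^ i * (-\<alpha>) ^ (m - i)) = of_nat (Suc m) * ev (Suc m) f \<beta> (-\<alpha>)"
proof -
  define F where "F k = f k (Suc m - k) * \<beta> ^ k * (-\<alpha>) ^ (Suc m - k)" for k
  have 1: "(\<Sum>i\<le>m. of_nat (Suc i) * f (Suc i) (m - i) * \<beta> * \<beta> ^ i * (-\<alpha>) ^ (m - i))
      = (\<Sum>k\<le>Suc m. of_nat k * F k)"
    unfolding sum.atMost_Suc_shift F_def by (simp add: algebra_simps)
  have 2: "(\<Sum>i\<le>m. - (of_nat (Suc (m - i)) * f i (Suc (m - i)) * \<alpha> * \<beta> ^ i * (-\<alpha>) ^ (m - i)))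
      = (\<Sum>k\<le>Suc m. of_nat (Suc m - k) * F k)"
    unfolding sum.atMost_Suc F_def
    by (simp, intro sum.cong refl) (simp add: Suc_diff_le algebra_simps)
  have 3: "(\<Sum>k\<le>Suc m. of_nat k * F k) + (\<Sum>k\<le>Suc m. of_nat (Suc m - k) * F k)
      = of_nat (Suc m) * (\<Sum>k\<le>Suc m. F k)"
    unfolding sum.distrib[symmetric] sum_distrib_left
  proof (intro sum.cong refl)
    fix k assume "k \<in> {..Suc m}"
    then have "(of_nat k + of_nat (Suc m - k) :: complex) = of_nat (Suc m)"
      by (simp add: of_nat_add[symmetric])
    then show "of_nat k * F k + of_nat (Suc m - k) * F k = of_nat (Suc m) * F k"
      by (simp add: distrib_right[symmetric])
  qed
  have "(\<Sum>i\<le>m. (of_nat (Suc i) * f (Suc i) (m - i) * \<beta> - of_nat (Suc (m - i)) * f i (Suc (m - i)) * \<alpha>)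
            * \<beta> ^ i * (-\<alpha>) ^ (m - i)) =
     (\<Sum>i\<le>m. of_nat (Suc i) * f (Suc i) (m - i) * \<beta> * \<beta> ^ i * (-\<alpha>) ^ (m - i)) +
     (\<Sum>i\<le>m. - (of_nat (Suc (m - i)) * f i (Suc (m - i)) * \<alpha> * \<beta> ^ i * (-\<alpha>) ^ (m - i)))"
    unfolding sum.distrib[symmetric] by (intro sum.cong refl) (simp add: algebra_simps)
  also have "\<dots> = of_nat (Suc m) * (\<Sum>k\<le>Suc m. F k)" unfolding 1 2 3 ..
  also have "\<dots> = of_nat (Suc m) * ev (Suc m) f \<beta> (-\<alpha>)" by (simp add: F_def ev_def)
  finally show ?thesis .
qed


theorem mainTheorem2:
  fixes f l :: ps2
  assumes "convergent_ps f" and "f \<noteq> ps_zero" and "f 0 0 = 0"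
    and "reduced_ps f"
    and "convergent_ps l" and "l \<noteq> ps_zero" and "l 0 0 = 0" and "ps_ord l = 1"
    and "jac f l 0 0 = 0"
    and "transverse l f"
  shows "transverse l (jac f l)"
  unfolding transverse_def
proof (rule notI, elim exE conjE)
  fix \<alpha> \<beta> assume tl: "is_tangent l \<alpha> \<beta>" and tJ: "is_tangent (jac f l) \<alpha> \<beta>"
  from tl obtain h0 where ab: "(\<alpha>, \<beta>) \<noteq> (0, 0)" and inl: "initial_form l = ps_mul (lin_form \<alpha> \<beta>) h0"
    unfolding is_tangent_def by auto
  define c where "c = h0 0 0"
  have l10: "l 1 0 = \<alpha> * c"
    using fun_cong[OF fun_cong[OF inl, of 1], of 0] assms(8) by (simp add: initial_form_def mul_lin c_def)
  have l01: "l 0 1 = \<beta> * c"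
    using fun_cong[OF fun_cong[OF inl, of 0], of 1] assms(8) by (simp add: initial_form_def mul_lin c_def)
  have c0: "c \<noteq> 0"
  proof
    assume "c = 0"
    obtain a b where "a + b = 1" "l a b \<noteq> 0" using ord_props(1)[OF assms(6)] assms(8) by auto
    then have "(a = 1 \<and> b = 0) \<or> (a = 0 \<and> b = 1)" by auto
    then show False using \<open>l a b \<noteq> 0\<close> l10 l01 \<open>c = 0\<close> by auto
  qed
  define n where "n = ps_ord f"
  have fl: "\<forall>a b. a + b < n \<longrightarrow> f a b = 0" using ord_props(2)[OF assms(2)] n_def by blast
  have "n \<noteq> 0"
  proof
    assume "n = 0"
    then obtain a b where "a + b = 0" "f a b \<noteq> 0" using ord_props(1)[OF assms(2)] n_def by auto
    then show False using assms(3) by auto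
  qed
  then obtain m where nm: "n = Suc m" by (cases n) auto
  have evf: "ev n f \<beta> (-\<alpha>) \<noteq> 0"
  proof
    assume z: "ev n f \<beta> (-\<alpha>) = 0"
    have "ev n (initial_form f) \<beta> (-\<alpha>) = ev n f \<beta> (-\<alpha>)"
      unfolding ev_def initial_form_def n_def[symmetric] by (intro sum.cong refl) auto
    then have z': "ev (Suc m) (initial_form f) \<beta> (-\<alpha>) = 0" using z nm by simp
    have hom: "\<forall>i j. i + j \<noteq> Suc m \<longrightarrow> initial_form f i j = 0"
      using nm n_def by (simp add: initial_form_def)
    obtain h where "\<forall>i j. i + j \<noteq> m \<longrightarrow> h i j = 0" "initial_form f = ps_mul (lin_form \<alpha> \<beta>) h"
      using lin_div[OF ab hom z'] by blast
    then have "is_tangent f \<alpha> \<beta>" unfolding is_tangent_def using assms(2) ab nm n_def by auto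
    then show False using assms(10) tl unfolding transverse_def by blast
  qed
  have dXf: "\<forall>a b. a + b < m \<longrightarrow> ps_dX f a b = 0" using fl nm by (auto simp: ps_dX_def)
  have dYf: "\<forall>a b. a + b < m \<longrightarrow> ps_dY f a b = 0" using fl nm by (auto simp: ps_dY_def)
  have J: "jac f l i j = (if i + j = m then c * (of_nat (Suc i) * f (Suc i) j * \<beta> - of_nat (Suc j) * f i (Suc j) * \<alpha>) else 0)"
    if "i + j \<le> m" for i j
    unfolding jac_def ps_sub_def mul_low[OF dXf that] mul_low[OF dYf that]
    using l10 l01 by (simp add: ps_dX_def ps_dY_def algebra_simps)
  have Jz: "\<forall>a b. a + b < m \<longrightarrow> jac f l a b = 0" using J by auto
  have "ev m (jac f l) \<beta> (-\<alpha>) = (\<Sum>i\<le>m. c * ((of_nat (Suc i) * f (Suc i) (m - i) * \<beta> - of_nat (Suc (m - i)) * f i (Suc (m - i)) * \<alpha>)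
            * \<beta> ^ i * (-\<alpha>) ^ (m - i)))"
    unfolding ev_def by (intro sum.cong refl) (simp add: J)
  also have "\<dots> = c * (of_nat n * ev n f \<beta> (-\<alpha>))"
    unfolding sum_distrib_left[symmetric] euler nm ..
  finally have evJ: "ev m (jac f l) \<beta> (-\<alpha>) \<noteq> 0" using c0 evf \<open>n \<noteq> 0\<close> by simp
  then obtain i where i: "i \<le> m" "jac f l i (m - i) \<noteq> 0"
    unfolding ev_def by (metis (no_types, lifting) atMost_iff mult_eq_0_iff sum.neutral)
  have ordJ: "ps_ord (jac f l) = m" by (rule ord_eq[of "jac f l" i "m - i"]) (use i Jz in auto)
  from tJ obtain h' where inJ: "initial_form (jac f l) = ps_mul (lin_form \<alpha> \<beta>) h'"
    unfolding is_tangent_def by auto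
  have "ev m (initial_form (jac f l)) \<beta> (-\<alpha>) = ev m (jac f l) \<beta> (-\<alpha>)"
    unfolding ev_def initial_form_def ordJ by (intro sum.cong refl) auto
  moreover have "ev m (ps_mul (lin_form \<alpha> \<beta>) h') \<beta> (-\<alpha>) = 0"
    by (cases m) (simp_all add: ev_mul_lin0 ev_mul_lin)
  ultimately show False using evJ inJ by simp
qed

end
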